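(* With the setup in the context, fix $X\subseteq E\setminus B$ and for $0\le\mu\le n$ let $E_\mu=\min_{Y\subseteq E,\,|Y|=\mu}H(\mathbf{m}\mid\mathbf{t},\mathbf{M})$ and $\Delta_\mu=n-k-E_\mu$. For $0\le j\le n-|X|-k$ let $\sigma_j=\min\{|Y|: Y\subseteq E,\ \rho_X(Y)=j\}$, and set $\sigma_{n-|X|-k+1}=\infty$. Then for $0\le j\le n-|X|-k$, $\Delta_\mu=|X|+j\iff\sigma_j\le\mu<\sigma_{j+1}.$
   Context: An almost affine code over a finite alphabet $A$ of length $n$ and dimension $k$ is a subset $C\subseteq A^n$ with $|C|=|A|^k$ such that for every $X\subseteq E=\{1,\dots,n\}$, $\log_{|A|}|C_X|$ is a nonnegative integer ($C_X$ = projection onto coordinates $X$); its associated matroid $M_C$ has rank function $r(X)=\log_{|A|}|C_X|$. Setup: $C$ is an almost affine code of length $n$ and dimension $k$ over $A$ with matroid rank function $r$; $B\subseteq E$ is a basis of $M_C$; $\varphi:A\times A\to A$ is such that for every $y\in A$ both $\varphi(y,\cdot)$ and $\varphi(\cdot,y)$ are bijections. For $\mathbf{m}\in A^{E\setminus B}$, $\Phi_{\mathbf{m}}(\mathbf{w})_i=\mathbf{w}_i$ for $i\in B$ and $=\varphi(\mathbf{w}_i,\mathbf{m}_i)$ for $i\in E\setminus B$, and $C_{\mathbf{m}}=\Phi_{\mathbf{m}}(C)$. For $X\subseteq E\setminus B$, $\mathbf{M}\in A^X$, $D_{X,\mathbf{M}}=\bigcup_{\mathbf{m}_X=\mathbf{M}}C_{\mathbf{m}}$,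 with matroid rank function $r_D(Y)=|Y\setminus(B\cup X)|+r(Y\cap(B\cup X))$, and $\rho_X(Y)=r_D(Y)-r(Y)$ (a demi-matroid rank function of rank $n-|X|-k$). The random model: $\mathbf{m}\in A^{E\setminus B}$ uniform, then $\mathbf{w}\in C_{\mathbf{m}}$ uniform; $\mathbf{M}=\mathbf{m}_X$, $\mathbf{t}=\mathbf{w}_Y$; $H(\mathbf{m}\mid\mathbf{t},\mathbf{M})$ is the conditional entropy with logarithms to base $|A|$ (convention $0\log\frac10=0$). *)

theory Defs
  imports "HOL-Probability.Probability_Mass_Function" "HOL-Library.FuncSet" "HOL-Library.Extended_Nat"
begin

text \<open>Coordinates are E = {1..n}; words are extensional functions in PiE E (\<lambda>_. A).\<close>

definition proj :: "nat set \<Rightarrow> (nat \<Rightarrow> 'a) \<Rightarrow> (nat \<Rightarrow> 'a)" where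
  "proj X w = restrict w X"

definition almost_affine :: "'a set \<Rightarrow> nat \<Rightarrow> nat \<Rightarrow> (nat \<Rightarrow> 'a) set \<Rightarrow> bool" where
  "almost_affine A n k C \<longleftrightarrow>
     C \<subseteq> PiE {1..n} (\<lambda>_. A) \<and> card C = card A ^ k \<and>
     (\<forall>X \<subseteq> {1..n}. \<exists>r::nat. log (card A) (real (card (proj X ` C))) = real r)"

definition code_rank :: "'a set \<Rightarrow> (nat \<Rightarrow> 'a) set \<Rightarrow> nat set \<Rightarrow> real" where
  "code_rank A C X = log (card A) (real (card (proj X ` C)))"

definition code_basis :: "'a set \<Rightarrow> nat \<Rightarrow> (nat \<Rightarrow> 'a) set \<Rightarrow> nat set \<Rightarrow> bool" where
  "code_basis A n C B \<longleftrightarrow>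
     B \<subseteq> {1..n} \<and> code_rank A C B = real (card B) \<and>
     (\<forall>I. B \<subset> I \<and> I \<subseteq> {1..n} \<longrightarrow> code_rank A C I \<noteq> real (card I))"

definition Phi :: "('a \<Rightarrow> 'a \<Rightarrow> 'a) \<Rightarrow> nat \<Rightarrow> nat set \<Rightarrow> (nat \<Rightarrow> 'a) \<Rightarrow> (nat \<Rightarrow> 'a) \<Rightarrow> (nat \<Rightarrow> 'a)" where
  "Phi \<phi> n B m w = restrict (\<lambda>i. if i \<in> B then w i else \<phi> (w i) (m i)) {1..n}"

definition code_m :: "('a \<Rightarrow> 'a \<Rightarrow> 'a) \<Rightarrow> nat \<Rightarrow> nat set \<Rightarrow> (nat \<Rightarrow> 'a) set \<Rightarrow> (nat \<Rightarrow> 'a) \<Rightarrow> (nat \<Rightarrow> 'a) set" where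
  "code_m \<phi> n B C m = Phi \<phi> n B m ` C"

definition model_pmf :: "'a set \<Rightarrow> ('a \<Rightarrow> 'a \<Rightarrow> 'a) \<Rightarrow> nat \<Rightarrow> nat set \<Rightarrow> (nat \<Rightarrow> 'a) set
    \<Rightarrow> ((nat \<Rightarrow> 'a) \<times> (nat \<Rightarrow> 'a)) pmf" where
  "model_pmf A \<phi> n B C =
     bind_pmf (pmf_of_set (PiE ({1..n} - B) (\<lambda>_. A)))
       (\<lambda>m. map_pmf (\<lambda>w. (m, w)) (pmf_of_set (code_m \<phi> n B C m)))"

text \<open>Conditional entropy H(F | G) of discrete random variables F, G on a pmf,
  logarithms to base b, with the convention 0 log (1/0) = 0 (sum over the support).\<close>
definition cond_entropy :: "real \<Rightarrow> 'w pmf \<Rightarrow> ('w \<Rightarrow> 'x) \<Rightarrow> ('w \<Rightarrow> 'y) \<Rightarrow> real" where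
  "cond_entropy b p F G =
     (\<Sum>z \<in> set_pmf (map_pmf (\<lambda>\<omega>. (F \<omega>, G \<omega>)) p).
        pmf (map_pmf (\<lambda>\<omega>. (F \<omega>, G \<omega>)) p) z *
        log b (pmf (map_pmf G p) (snd z) / pmf (map_pmf (\<lambda>\<omega>. (F \<omega>, G \<omega>)) p) z))"

text \<open>H(m | t, M) with t = w_Y and M = m_X.\<close>
definition H_mtM :: "'a set \<Rightarrow> ('a \<Rightarrow> 'a \<Rightarrow> 'a) \<Rightarrow> nat \<Rightarrow> nat set \<Rightarrow> (nat \<Rightarrow> 'a) set
    \<Rightarrow> nat set \<Rightarrow> nat set \<Rightarrow> real" where
  "H_mtM A \<phi> n B C X Y =
     cond_entropy (card A) (model_pmf A \<phi> n B C) fst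
       (\<lambda>(m, w). (proj Y w, proj X m))"

definition E_mu :: "'a set \<Rightarrow> ('a \<Rightarrow> 'a \<Rightarrow> 'a) \<Rightarrow> nat \<Rightarrow> nat set \<Rightarrow> (nat \<Rightarrow> 'a) set
    \<Rightarrow> nat set \<Rightarrow> nat \<Rightarrow> real" where
  "E_mu A \<phi> n B C X \<mu> = Min {H_mtM A \<phi> n B C X Y | Y. Y \<subseteq> {1..n} \<and> card Y = \<mu>}"

definition Delta_mu :: "'a set \<Rightarrow> ('a \<Rightarrow> 'a \<Rightarrow> 'a) \<Rightarrow> nat \<Rightarrow> nat \<Rightarrow> nat set \<Rightarrow> (nat \<Rightarrow> 'a) set
    \<Rightarrow> nat set \<Rightarrow> nat \<Rightarrow> real" where
  "Delta_mu A \<phi> n k B C X \<mu> = real n - real k - E_mu A \<phi> n B C X \<mu>"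

definition rank_D :: "'a set \<Rightarrow> (nat \<Rightarrow> 'a) set \<Rightarrow> nat set \<Rightarrow> nat set \<Rightarrow> nat set \<Rightarrow> real" where
  "rank_D A C B X Y = real (card (Y - (B \<union> X))) + code_rank A C (Y \<inter> (B \<union> X))"

definition rho :: "'a set \<Rightarrow> (nat \<Rightarrow> 'a) set \<Rightarrow> nat set \<Rightarrow> nat set \<Rightarrow> nat set \<Rightarrow> real" where
  "rho A C B X Y = rank_D A C B X Y - code_rank A C Y"

definition sigma :: "'a set \<Rightarrow> nat \<Rightarrow> nat \<Rightarrow> (nat \<Rightarrow> 'a) set \<Rightarrow> nat set \<Rightarrow> nat set \<Rightarrow> nat \<Rightarrow> enat" where
  "sigma A n k C B X j =
     (if j = n - card X - k + 1 then \<infinity>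
      else (INF Y \<in> {Y. Y \<subseteq> {1..n} \<and> rho A C B X Y = real j}. enat (card Y)))"

end

theory Submission
  imports Defs
begin


lemma card_fibers:
  assumes "finite S"
  shows "card S = (\<Sum>y\<in>f ` S. card {x\<in>S. f x = y})"
  using sum.image_gen[OF assms, of "\<lambda>_. 1::nat" f] by simp

lemma proj_eq_iff: "proj Y c = proj Y c' \<longleftrightarrow> (\<forall>i\<in>Y. c i = c' i)"
proof
  assume eq: "proj Y c = proj Y c'"
  show "\<forall>i\<in>Y. c i = c' i"
  proof
    fix i assume i: "i \<in> Y"
    have "restrict c Y i = restrict c' Y i" using eq unfolding proj_def by simp
    thus "c i = c' i" using i by simp
  qed
next
  assume "\<forall>i\<in>Y. c i = c' i"
  thus "proj Y c = proj Y c'" unfolding proj_def by (intro restrict_ext) auto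
qed

lemma sum_all_eq_le:
  fixes f :: "'b \<Rightarrow> nat"
  assumes "finite S" "\<forall>x\<in>S. f x \<le> c" "sum f S = c * card S" "x \<in> S"
  shows "f x = c"
proof (rule ccontr)
  assume "f x \<noteq> c"
  hence "f x < c" using assms by auto
  hence "sum f S < sum (\<lambda>_. c) S" using assms by (intro sum_strict_mono_ex1) auto
  thus False using assms by simp
qed

lemma sum_all_eq_ge:
  fixes f :: "'b \<Rightarrow> nat"
  assumes "finite S" "\<forall>x\<in>S. f x \<ge> c" "sum f S = c * card S" "x \<in> S"
  shows "f x = c"
proof (rule ccontr)
  assume "f x \<noteq> c"
  hence "f x > c" using assms by auto
  hence "sum (\<lambda>_. c) S < sum f S" using assms by (intro sum_strict_mono_ex1) auto
  thus False using assms by simp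
qed

lemma proj_sub: "Y \<subseteq> Y' \<Longrightarrow> restrict (proj Y' c) Y = proj Y c"
  unfolding proj_def by (simp add: Int_absorb1)

locale aac =
  fixes A :: "'a set" and C :: "(nat \<Rightarrow> 'a) set" and n k :: nat and B :: "nat set"
  assumes finA: "finite A" and cardA: "card A \<ge> 2"
    and aa: "almost_affine A n k C"
    and basis: "code_basis A n C B"
begin

abbreviation "q \<equiv> card A"
abbreviation "E \<equiv> {1..n}"

definition NN :: "nat set \<Rightarrow> nat" where "NN Y = card (proj Y ` C)"

lemma C_PiE: "C \<subseteq> PiE E (\<lambda>_. A)" using aa unfolding almost_affine_def by auto
lemma finC: "finite C" using finite_subset[OF C_PiE] finite_PiE[of E "\<lambda>_. A"] finA by auto
lemma cardC: "card C = q ^ k" using aa unfolding almost_affine_def by auto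
lemma q_gt1: "q > 1" using cardA by simp
lemma C_ne: "C \<noteq> {}"
proof -
  have "card C > 0" using cardC q_gt1 by simp
  thus ?thesis by auto
qed

lemma NN_pos: "NN Y > 0" unfolding NN_def using finC C_ne by (simp add: card_gt_0_iff)

lemma NN_pow_ex: assumes "Y \<subseteq> E" shows "\<exists>r. NN Y = q ^ r"
proof -
  obtain r :: nat where r: "log (real q) (real (NN Y)) = real r"
    using aa assms unfolding almost_affine_def NN_def by blast
  have "real (NN Y) = real q powr (real r)"
    using r[symmetric] NN_pos q_gt1 powr_log_cancel[of "real q" "real (NN Y)"] by simp
  also have "\<dots> = real q ^ r" using q_gt1 by (simp add: powr_realpow)
  finally have "NN Y = q ^ r" by (metis of_nat_eq_iff of_nat_power)
  thus ?thesis by blast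
qed

definition rk :: "nat set \<Rightarrow> nat" where "rk Y = (THE r. NN Y = q ^ r)"

lemma NN_rk: assumes "Y \<subseteq> E" shows "NN Y = q ^ rk Y"
proof -
  obtain r where r: "NN Y = q ^ r" using NN_pow_ex[OF assms] by blast
  have "rk Y = r" unfolding rk_def
    by (rule the_equality) (use r q_gt1 in \<open>auto simp: power_inject_exp\<close>)
  thus ?thesis using r by simp
qed

lemma pow_inj: "q ^ a = q ^ b \<Longrightarrow> a = b" using q_gt1 by (simp add: power_inject_exp)
lemma pow_le: "q ^ a \<le> q ^ b \<Longrightarrow> a \<le> b" using q_gt1 power_le_imp_le_exp by blast

lemma code_rank_rk: assumes "Y \<subseteq> E" shows "code_rank A C Y = real (rk Y)"
proof -
  have "code_rank A C Y = log (real q) (real q ^ rk Y)"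
    unfolding code_rank_def using NN_rk[OF assms] unfolding NN_def by simp
  also have "\<dots> = real (rk Y)" using q_gt1 by (simp add: log_nat_power)
  finally show ?thesis .
qed

lemma proj_E: "c \<in> C \<Longrightarrow> proj E c = c"
  using C_PiE unfolding proj_def by (meson PiE_restrict subsetD)

lemma NN_E: "NN E = card C"
proof -
  have "proj E ` C = id ` C" by (rule image_cong) (use proj_E in auto)
  thus ?thesis unfolding NN_def by simp
qed

lemma rk_E: "rk E = k"
proof -
  have "q ^ rk E = q ^ k" using NN_rk[of E] NN_E cardC by simp
  thus ?thesis by (rule pow_inj)
qed

lemma NN_mono: assumes "Y \<subseteq> Y'" shows "NN Y \<le> NN Y'"
proof -
  have "proj Y ` C = (\<lambda>y. restrict y Y) ` (proj Y' ` C)"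
    by (simp add: image_image proj_sub[OF assms])
  thus ?thesis unfolding NN_def by (metis card_image_le finC finite_imageI)
qed

lemma rk_mono: assumes "Y \<subseteq> Y'" "Y' \<subseteq> E" shows "rk Y \<le> rk Y'"
proof -
  have "q ^ rk Y \<le> q ^ rk Y'" using NN_mono[OF assms(1)] NN_rk[of Y] NN_rk[of Y'] assms by auto
  thus ?thesis by (rule pow_le)
qed

lemma rk_le_k: "Y \<subseteq> E \<Longrightarrow> rk Y \<le> k" using rk_mono[of Y E] rk_E by simp

lemma NN_step: assumes "e \<notin> Y" "e \<in> E" shows "NN (insert e Y) \<le> q * NN Y"
proof -
  have "proj (insert e Y) ` C \<subseteq> (\<lambda>(x,a). x(e := a)) ` (proj Y ` C \<times> A)"
  proof
    fix y assume "y \<in> proj (insert e Y) ` C"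
    then obtain c where c: "c \<in> C" "y = proj (insert e Y) c" by auto
    have "c \<in> PiE E (\<lambda>_. A)" using c C_PiE by auto
    hence ce: "c e \<in> A" using assms(2) by (rule PiE_mem)
    have yy: "y = (proj Y c)(e := c e)" using c(2) assms(1) unfolding proj_def by (auto simp: fun_eq_iff)
    show "y \<in> (\<lambda>(x,a). x(e := a)) ` (proj Y ` C \<times> A)"
      by (rule image_eqI[where x="(proj Y c, c e)"]) (use yy ce c(1) in auto)
  qed
  hence "NN (insert e Y) \<le> card ((\<lambda>(x,a). x(e := a)) ` (proj Y ` C \<times> A))"
    unfolding NN_def by (intro card_mono) (auto intro!: finite_imageI simp: finC finA)
  also have "\<dots> \<le> card (proj Y ` C \<times> A)" by (rule card_image_le) (simp add: finC finA)
  also have "\<dots> = q * NN Y" by (simp add: card_cartesian_product NN_def)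
  finally show ?thesis .
qed

lemma fiber_aux:
  "\<forall>Y c0. Y \<subseteq> E \<longrightarrow> card (E - Y) = d \<longrightarrow> c0 \<in> C \<longrightarrow>
     card {c\<in>C. proj Y c = proj Y c0} * NN Y = card C"
proof (induction d)
  case 0
  show ?case
  proof (intro allI impI)
    fix Y c0 assume Y: "Y \<subseteq> E" "card (E - Y) = 0" "c0 \<in> C"
    have "E - Y = {}" using Y by simp
    hence YE: "Y = E" using Y by auto
    have "{c\<in>C. proj Y c = proj Y c0} = {c0}" using Y(3) proj_E unfolding YE by auto
    thus "card {c\<in>C. proj Y c = proj Y c0} * NN Y = card C" using NN_E YE by simp
  qed
next
  case (Suc d)
  show ?case
  proof (intro allI impI)
    fix Y c0 assume Y: "Y \<subseteq> E" "card (E - Y) = Suc d" "c0 \<in> C"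
    have "E - Y \<noteq> {}" using Y(2) by (metis card.empty nat.simps(3))
    then obtain e where e: "e \<in> E - Y" by blast
    define Y' where "Y' = insert e Y"
    have Y'E: "Y' \<subseteq> E" using e Y unfolding Y'_def by auto
    have "E - Y' = (E - Y) - {e}" unfolding Y'_def by auto
    hence "card (E - Y') = d" using Y(2) e by simp
    hence IH: "\<And>c1. c1 \<in> C \<Longrightarrow> card {c\<in>C. proj Y' c = proj Y' c1} * NN Y' = card C"
      using Suc.IH Y'E by blast
    have YY': "Y \<subseteq> Y'" unfolding Y'_def by auto
    define ext where "ext x = card {y \<in> proj Y' ` C. restrict y Y = x}" for x
    have a: "card {c\<in>C. proj Y c = proj Y c1} * NN Y' = ext (proj Y c1) * card C" if c1: "c1 \<in> C" for c1
    proof -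
      let ?F = "{c\<in>C. proj Y c = proj Y c1}"
      have finF: "finite ?F" using finC by simp
      have img: "proj Y' ` ?F = {y \<in> proj Y' ` C. restrict y Y = proj Y c1}"
        by (auto simp: proj_sub[OF YY'])
      have "card ?F = (\<Sum>y\<in>proj Y' ` ?F. card {c\<in>?F. proj Y' c = y})"
        by (rule card_fibers[OF finF])
      hence "card ?F * NN Y' = (\<Sum>y\<in>proj Y' ` ?F. card {c\<in>?F. proj Y' c = y} * NN Y')"
        by (simp add: sum_distrib_right)
      also have "\<dots> = (\<Sum>y\<in>proj Y' ` ?F. card C)"
      proof (rule sum.cong[OF refl])
        fix y assume "y \<in> proj Y' ` ?F"
        then obtain c2 where c2: "c2 \<in> ?F" "y = proj Y' c2" by auto
        have "{c\<in>?F. proj Y' c = y} = {c\<in>C. proj Y' c = proj Y' c2}"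
          using c2 YY' by (auto simp: proj_sub[OF YY'] proj_eq_iff subset_iff)
        thus "card {c\<in>?F. proj Y' c = y} * NN Y' = card C" using IH c2 by simp
      qed
      also have "\<dots> = ext (proj Y c1) * card C" using img unfolding ext_def by simp
      finally show ?thesis .
    qed
    have b1: "ext x \<le> q" for x
    proof -
      let ?S = "{y \<in> proj Y' ` C. restrict y Y = x}"
      have "inj_on (\<lambda>y. y e) ?S"
      proof (rule inj_onI)
        fix y y' assume y: "y \<in> ?S" and y': "y' \<in> ?S" and eq: "y e = y' e"
        have r: "restrict y Y' = y" "restrict y' Y' = y'" using y y' unfolding proj_def by auto
        have "(restrict y Y)(e := y e) = restrict y Y'" using e unfolding Y'_def by simp
        hence "y = (restrict y Y)(e := y e)" using r(1) by simp
        also have "\<dots> = (restrict y' Y)(e := y' e)" using y y' eq by simp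
        also have "\<dots> = restrict y' Y'" using e unfolding Y'_def by simp
        also have "\<dots> = y'" using r(2) by simp
        finally show "y = y'" .
      qed
      moreover have "(\<lambda>y. y e) ` ?S \<subseteq> A"
      proof
        fix a assume "a \<in> (\<lambda>y. y e) ` ?S"
        then obtain c where c: "c \<in> C" "a = proj Y' c e" by auto
        have "c \<in> PiE E (\<lambda>_. A)" using c C_PiE by auto
        hence "c e \<in> A" using e PiE_mem[of c E "\<lambda>_. A" e] by simp
        thus "a \<in> A" using c unfolding proj_def Y'_def by simp
      qed
      ultimately show ?thesis unfolding ext_def using finA by (rule card_inj_on_le)
    qed
    have b2: "ext (proj Y c1) \<ge> 1" if "c1 \<in> C" for c1
    proof -
      have "proj Y' c1 \<in> {y \<in> proj Y' ` C. restrict y Y = proj Y c1}"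
        using that by (auto simp: proj_sub[OF YY'])
      moreover have "finite {y \<in> proj Y' ` C. restrict y Y = proj Y c1}" using finC by simp
      ultimately have "card {y \<in> proj Y' ` C. restrict y Y = proj Y c1} > 0" by (auto simp: card_gt_0_iff)
      thus ?thesis unfolding ext_def by simp
    qed
    have c: "(\<Sum>x\<in>proj Y ` C. ext x) = NN Y'"
    proof -
      have "NN Y' = (\<Sum>x\<in>(\<lambda>y. restrict y Y) ` proj Y' ` C. card {y\<in>proj Y' ` C. restrict y Y = x})"
        unfolding NN_def by (rule card_fibers) (simp add: finC)
      moreover have "(\<lambda>y. restrict y Y) ` proj Y' ` C = proj Y ` C"
        by (simp add: image_image proj_sub[OF YY'])
      ultimately show ?thesis unfolding ext_def by simp
    qed
    have d: "NN Y \<le> NN Y'" "NN Y' \<le> q * NN Y"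
      using NN_mono[OF YY'] NN_step[of e Y] e unfolding Y'_def by auto
    obtain a b where ab: "NN Y' = q ^ a" "NN Y = q ^ b" using NN_rk Y'E Y(1) by blast
    have "q ^ b \<le> q ^ a" using d(1) ab by simp
    hence "b \<le> a" by (rule pow_le)
    moreover have "q ^ a \<le> q ^ Suc b" using d(2) ab by simp
    hence "a \<le> Suc b" by (rule pow_le)
    ultimately have "a = b \<or> a = Suc b" by auto
    hence ee: "ext x * NN Y = NN Y'" if "x \<in> proj Y ` C" for x
    proof
      assume "a = b"
      hence "(\<Sum>x\<in>proj Y ` C. ext x) = 1 * card (proj Y ` C)" using c ab unfolding NN_def by simp
      hence "ext x = 1" using b2 that finC by (intro sum_all_eq_ge[where S="proj Y ` C" and f=ext and c=1]) auto
      thus ?thesis using \<open>a = b\<close> ab by simp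
    next
      assume "a = Suc b"
      hence "(\<Sum>x\<in>proj Y ` C. ext x) = q * card (proj Y ` C)" using c ab unfolding NN_def by simp
      hence "ext x = q" using b1 that finC by (intro sum_all_eq_le[where S="proj Y ` C" and f=ext and c=q]) auto
      thus ?thesis using \<open>a = Suc b\<close> ab by simp
    qed
    have "proj Y c0 \<in> proj Y ` C" using Y(3) by simp
    hence eeY: "ext (proj Y c0) * NN Y = NN Y'" by (rule ee)
    have "card {c\<in>C. proj Y c = proj Y c0} * NN Y * NN Y' = (card {c\<in>C. proj Y c = proj Y c0} * NN Y') * NN Y"
      by (simp add: ac_simps)
    also have "\<dots> = ext (proj Y c0) * card C * NN Y" using a[OF Y(3)] by simp
    also have "\<dots> = (ext (proj Y c0) * NN Y) * card C" by (simp add: ac_simps)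
    also have "\<dots> = NN Y' * card C" using eeY by simp
    finally have "card {c\<in>C. proj Y c = proj Y c0} * NN Y * NN Y' = NN Y' * card C" .
    thus "card {c\<in>C. proj Y c = proj Y c0} * NN Y = card C" using NN_pos[of Y'] by simp
  qed
qed

lemma fiber: assumes "Y \<subseteq> E" "c0 \<in> C"
  shows "card {c\<in>C. proj Y c = proj Y c0} * NN Y = card C"
  using fiber_aux[of "card (E - Y)"] assms by blast

end

context aac begin

lemma fib_sub: "{c\<in>C. proj Y' c = proj Y' c0} \<subseteq> {c\<in>C. proj Y c = proj Y c0}" if "Y \<subseteq> Y'"
  using that by (auto simp: proj_eq_iff subset_iff)

lemma det: assumes "Y \<subseteq> E" "e \<in> E" "rk (insert e Y) = rk Y" "c \<in> C" "c' \<in> C"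
    "proj Y c = proj Y c'" shows "c e = c' e"
proof -
  let ?Y' = "insert e Y"
  have Y'E: "?Y' \<subseteq> E" using assms by auto
  have NNeq: "NN ?Y' = NN Y" using NN_rk[OF Y'E] NN_rk[OF assms(1)] assms(3) by simp
  have "card {d\<in>C. proj ?Y' d = proj ?Y' c} * NN ?Y' = card {d\<in>C. proj Y d = proj Y c} * NN Y"
    using fiber[OF Y'E assms(4)] fiber[OF assms(1) assms(4)] by simp
  hence ceq: "card {d\<in>C. proj ?Y' d = proj ?Y' c} = card {d\<in>C. proj Y d = proj Y c}"
    using NNeq NN_pos[of Y] by simp
  have "{d\<in>C. proj ?Y' d = proj ?Y' c} = {d\<in>C. proj Y d = proj Y c}"
    by (rule card_subset_eq) (use finC ceq fib_sub[of Y ?Y' c] in auto)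
  hence "c' \<in> {d\<in>C. proj ?Y' d = proj ?Y' c}" using assms(5,6) by auto
  thus ?thesis by (auto simp: proj_eq_iff)
qed

lemma det_rk: assumes "Y \<subseteq> E" "e \<in> E"
    "\<And>c c'. c \<in> C \<Longrightarrow> c' \<in> C \<Longrightarrow> proj Y c = proj Y c' \<Longrightarrow> c e = c' e"
  shows "rk (insert e Y) = rk Y"
proof -
  let ?Y' = "insert e Y"
  have Y'E: "?Y' \<subseteq> E" using assms by auto
  have YY': "Y \<subseteq> ?Y'" by auto
  have "inj_on (\<lambda>y. restrict y Y) (proj ?Y' ` C)"
  proof (rule inj_onI)
    fix y y' assume "y \<in> proj ?Y' ` C" "y' \<in> proj ?Y' ` C" and eq: "restrict y Y = restrict y' Y"
    then obtain c c' where c: "c \<in> C" "c' \<in> C" "y = proj ?Y' c" "y' = proj ?Y' c'" by auto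
    have "proj Y c = proj Y c'" using eq c by (simp add: proj_sub[OF YY'])
    hence "c e = c' e" using assms(3) c by blast
    thus "y = y'" using c \<open>proj Y c = proj Y c'\<close> by (auto simp: proj_eq_iff)
  qed
  moreover have "(\<lambda>y. restrict y Y) ` proj ?Y' ` C = proj Y ` C"
    by (simp add: image_image proj_sub[OF YY'])
  ultimately have "NN ?Y' = NN Y" unfolding NN_def by (metis card_image)
  hence "q ^ rk ?Y' = q ^ rk Y" using NN_rk[OF Y'E] NN_rk[OF assms(1)] by simp
  thus ?thesis by (rule pow_inj)
qed

lemma rk_insert: assumes "Y \<subseteq> E" "e \<in> E"
  shows "rk (insert e Y) = rk Y \<or> rk (insert e Y) = Suc (rk Y)"
proof (cases "e \<in> Y")
  case True thus ?thesis by (simp add: insert_absorb)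
next
  case False
  have Y'E: "insert e Y \<subseteq> E" using assms by auto
  have "q ^ rk Y \<le> q ^ rk (insert e Y)" using NN_mono[of Y "insert e Y"] NN_rk[OF Y'E] NN_rk[OF assms(1)] by auto
  hence "rk Y \<le> rk (insert e Y)" by (rule pow_le)
  moreover have "q ^ rk (insert e Y) \<le> q ^ Suc (rk Y)" using NN_step[OF False assms(2)] NN_rk[OF Y'E] NN_rk[OF assms(1)] by simp
  hence "rk (insert e Y) \<le> Suc (rk Y)" by (rule pow_le)
  ultimately show ?thesis by auto
qed

lemma submod: assumes "Z \<subseteq> Y" "Y \<subseteq> E" "e \<in> E" "rk (insert e Z) = rk Z"
  shows "rk (insert e Y) = rk Y"
proof (rule det_rk[OF assms(2,3)])
  fix c c' assume c: "c \<in> C" "c' \<in> C" "proj Y c = proj Y c'"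
  hence "proj Z c = proj Z c'" using assms(1) by (auto simp: proj_eq_iff)
  thus "c e = c' e" using det[OF _ assms(3,4) c(1,2)] assms(1,2) by blast
qed

lemma basis_props: "B \<subseteq> E" "rk B = k" "card B = k"
proof -
  show BE: "B \<subseteq> E" using basis unfolding code_basis_def by auto
  have rkB: "rk B = card B" using basis code_rank_rk[OF BE] unfolding code_basis_def by simp
  have max: "\<And>I. B \<subset> I \<Longrightarrow> I \<subseteq> E \<Longrightarrow> code_rank A C I \<noteq> real (card I)"
    using basis unfolding code_basis_def by blast
  have "rk B = k"
  proof (rule ccontr)
    assume ne: "rk B \<noteq> k"
    show False
    proof (cases "\<exists>e\<in>E - B. rk (insert e B) \<noteq> rk B")
      case True
      then obtain e where e: "e \<in> E - B" "rk (insert e B) \<noteq> rk B" by blast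
      hence "rk (insert e B) = Suc (rk B)" using rk_insert[OF BE, of e] by auto
      moreover have "card (insert e B) = Suc (card B)"
        using e finite_subset[OF BE] by simp
      moreover have "insert e B \<subseteq> E" using e BE by auto
      ultimately have "code_rank A C (insert e B) = real (card (insert e B))"
        using rkB code_rank_rk by simp
      moreover have "B \<subset> insert e B" using e by auto
      ultimately show False using max \<open>insert e B \<subseteq> E\<close> by blast
    next
      case False
      have "inj_on (proj B) C"
      proof (rule inj_onI)
        fix c c' assume c: "c \<in> C" "c' \<in> C" "proj B c = proj B c'"
        have "\<forall>i\<in>E. c i = c' i"
        proof
          fix i assume i: "i \<in> E"
          show "c i = c' i"
          proof (cases "i \<in> B")
            case True thus ?thesis using c by (auto simp: proj_eq_iff)
          next
            assume iB: "i \<notin> B"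
            thus ?thesis using False i det[OF BE i _ c] by blast
          qed
        qed
        hence "proj E c = proj E c'" by (simp add: proj_eq_iff)
        thus "c = c'" using proj_E c by simp
      qed
      hence "NN B = card C" unfolding NN_def by (simp add: card_image)
      hence "q ^ rk B = q ^ k" using NN_rk[OF BE] cardC by simp
      hence "rk B = k" by (rule pow_inj)
      thus False using ne by simp
    qed
  qed
  thus "rk B = k" .
  thus "card B = k" using rkB by simp
qed

end


lemma pmf_map_of_set:
  assumes "finite P" "P \<noteq> {}"
  shows "pmf (map_pmf f (pmf_of_set P)) z = real (card {x\<in>P. f x = z}) / real (card P)"
proof -
  have "pmf (map_pmf f (pmf_of_set P)) z = measure (pmf_of_set P) (f -` {z})" by (simp add: pmf_map)
  also have "\<dots> = real (card (P \<inter> f -` {z})) / real (card P)" using assms by (simp add: measure_pmf_of_set)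
  also have "P \<inter> f -` {z} = {x\<in>P. f x = z}" by auto
  finally show ?thesis .
qed

lemma pmf_of_set_times:
  assumes "finite S" "S \<noteq> {}" "finite T" "T \<noteq> {}"
  shows "pmf_of_set (S \<times> T) = pair_pmf (pmf_of_set S) (pmf_of_set T)"
proof (rule pmf_eqI)
  fix z :: "'a \<times> 'b"
  obtain a b where z: "z = (a, b)" by force
  show "pmf (pmf_of_set (S \<times> T)) z = pmf (pair_pmf (pmf_of_set S) (pmf_of_set T)) z"
    using assms unfolding z by (simp add: pmf_pair card_cartesian_product indicator_def)
qed

locale aacp = aac +
  fixes \<phi> :: "'a \<Rightarrow> 'a \<Rightarrow> 'a" and X :: "nat set"
  assumes bij: "\<forall>y\<in>A. bij_betw (\<phi> y) A A \<and> bij_betw (\<lambda>x. \<phi> x y) A A"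
    and XB: "X \<subseteq> E - B"
begin

abbreviation "MA \<equiv> PiE (E - B) (\<lambda>_. A)"
abbreviation "Ph \<equiv> Phi \<phi> n B"

lemma finMA: "finite MA" using finA by (simp add: finite_PiE)
lemma MA_ne: "MA \<noteq> {}" using cardA by (simp add: PiE_eq_empty_iff) (metis card.empty ex_in_conv not_numeral_le_zero)
lemma cardMA: "card MA = q ^ (n - k)"
proof -
  have "card MA = q ^ card (E - B)" by (simp add: card_PiE)
  moreover have "card (E - B) = n - k" using basis_props by (simp add: card_Diff_subset finite_subset)
  ultimately show ?thesis by simp
qed

lemma C_mem: "c \<in> C \<Longrightarrow> i \<in> E \<Longrightarrow> c i \<in> A"
  using C_PiE PiE_mem[of c E "\<lambda>_. A" i] by auto
lemma MA_mem: "m \<in> MA \<Longrightarrow> i \<in> E - B \<Longrightarrow> m i \<in> A"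
  using PiE_mem[of m "E - B" "\<lambda>_. A" i] by auto

lemma inj1: "y \<in> A \<Longrightarrow> inj_on (\<lambda>x. \<phi> x y) A" using bij by (auto simp: bij_betw_def)
lemma inj2: "y \<in> A \<Longrightarrow> inj_on (\<phi> y) A" using bij by (auto simp: bij_betw_def)

lemma Phi_inj: assumes "m \<in> MA" shows "inj_on (Ph m) C"
proof (rule inj_onI)
  fix c c' assume c: "c \<in> C" "c' \<in> C" and eq: "Ph m c = Ph m c'"
  have "\<forall>i\<in>E. c i = c' i"
  proof
    fix i assume i: "i \<in> E"
    have e: "(if i \<in> B then c i else \<phi> (c i) (m i)) = (if i \<in> B then c' i else \<phi> (c' i) (m i))"
      using fun_cong[OF eq, of i] i unfolding Phi_def by simp
    show "c i = c' i"
    proof (cases "i \<in> B")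
      case True thus ?thesis using e by simp
    next
      case False
      hence "\<phi> (c i) (m i) = \<phi> (c' i) (m i)" using e by simp
      moreover have "m i \<in> A" using MA_mem[OF assms] i False by simp
      ultimately show ?thesis using inj1[of "m i"] C_mem[OF c(1) i] C_mem[OF c(2) i] by (auto dest: inj_onD)
    qed
  qed
  hence "proj E c = proj E c'" by (simp add: proj_eq_iff)
  thus "c = c'" using proj_E c by simp
qed

definition hh where "hh = (\<lambda>(m, c). (m, Ph m c))"

lemma model_eq: "model_pmf A \<phi> n B C = map_pmf hh (pmf_of_set (MA \<times> C))"
proof -
  have "model_pmf A \<phi> n B C = bind_pmf (pmf_of_set MA) (\<lambda>m. map_pmf (\<lambda>c. (m, Ph m c)) (pmf_of_set C))"
    unfolding model_pmf_def
  proof (rule bind_pmf_cong[OF refl])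
    fix m assume "m \<in> set_pmf (pmf_of_set MA)"
    hence m: "m \<in> MA" using finMA MA_ne by simp
    have "pmf_of_set (code_m \<phi> n B C m) = map_pmf (Ph m) (pmf_of_set C)"
      unfolding code_m_def using map_pmf_of_set_inj[OF Phi_inj[OF m] C_ne finC] by simp
    thus "map_pmf (Pair m) (pmf_of_set (code_m \<phi> n B C m)) = map_pmf (\<lambda>c. (m, Ph m c)) (pmf_of_set C)"
      by (simp add: map_pmf_comp)
  qed
  also have "\<dots> = map_pmf hh (pair_pmf (pmf_of_set MA) (pmf_of_set C))"
    unfolding pair_pmf_def hh_def by (simp add: map_pmf_def bind_assoc_pmf bind_return_pmf)
  also have "\<dots> = map_pmf hh (pmf_of_set (MA \<times> C))"
    using pmf_of_set_times[OF finMA MA_ne finC C_ne] by simp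
  finally show ?thesis .
qed

end

context aacp begin

lemma projPh: assumes "Y \<subseteq> E" "i \<in> Y"
  shows "proj Y (Ph m c) i = (if i \<in> B then c i else \<phi> (c i) (m i))"
  using assms unfolding proj_def Phi_def by auto

lemma projPh_eq: assumes "Y \<subseteq> E"
  shows "proj Y (Ph m c) = proj Y (Ph m' c') \<longleftrightarrow>
    (\<forall>i\<in>Y. (if i \<in> B then c i else \<phi> (c i) (m i)) = (if i \<in> B then c' i else \<phi> (c' i) (m' i)))"
proof -
  have ph: "Ph m c i = (if i \<in> B then c i else \<phi> (c i) (m i))" if "i \<in> Y" for m c i
    using assms that unfolding Phi_def by auto
  show ?thesis unfolding proj_eq_iff using ph by simp
qed

lemma eq1: assumes "Y \<subseteq> E" "m0 \<in> MA" "c \<in> C" "c0 \<in> C"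
  shows "proj Y (Ph m0 c) = proj Y (Ph m0 c0) \<longleftrightarrow> proj Y c = proj Y c0"
proof -
  have "(if i \<in> B then c i else \<phi> (c i) (m0 i)) = (if i \<in> B then c0 i else \<phi> (c0 i) (m0 i)) \<longleftrightarrow> c i = c0 i"
    if i: "i \<in> Y" for i
  proof (cases "i \<in> B")
    case False
    have iE: "i \<in> E" using i assms(1) by auto
    have "m0 i \<in> A" using MA_mem[OF assms(2)] iE False by simp
    thus ?thesis using False inj1[of "m0 i"] C_mem[OF assms(3) iE] C_mem[OF assms(4) iE]
      by (auto dest: inj_onD)
  qed simp
  hence "(\<forall>i\<in>Y. (if i \<in> B then c i else \<phi> (c i) (m0 i)) = (if i \<in> B then c0 i else \<phi> (c0 i) (m0 i)))
     \<longleftrightarrow> (\<forall>i\<in>Y. c i = c0 i)" by blast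
  thus ?thesis using projPh_eq[OF assms(1), of m0 c m0 c0] proj_eq_iff[of Y c c0] by simp
qed

definition gg where
  "gg m0 c0 c i = (if i \<in> X then m0 i else inv_into A (\<phi> (c i)) (\<phi> (c0 i) (m0 i)))"

lemma eqG:
  assumes Y: "Y \<subseteq> E" and m0: "m0 \<in> MA" and c0: "c0 \<in> C" and m: "m \<in> MA" and c: "c \<in> C"
  shows "(proj Y (Ph m c) = proj Y (Ph m0 c0) \<and> proj X m = proj X m0) \<longleftrightarrow>
    (proj (Y \<inter> (B \<union> X)) c = proj (Y \<inter> (B \<union> X)) c0 \<and> (\<forall>i\<in>X \<union> (Y - (B \<union> X)). m i = gg m0 c0 c i))"
proof -
  have XE: "X \<subseteq> E - B" using XB .
  have pt: "(m i = m0 i \<longrightarrow> ((if i \<in> B then c i else \<phi> (c i) (m i)) = (if i \<in> B then c0 i else \<phi> (c0 i) (m0 i))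
             \<longleftrightarrow> (i \<in> B \<union> X \<longrightarrow> c i = c0 i)))"
    if i: "i \<in> Y" "i \<in> X" for i
  proof -
    have iE: "i \<in> E" "i \<notin> B" using i XE Y by auto
    have "m0 i \<in> A" using MA_mem[OF m0] iE by simp
    thus ?thesis using i iE inj1[of "m0 i"] C_mem[OF c iE(1)] C_mem[OF c0 iE(1)] by (auto dest: inj_onD)
  qed
  have pw: "((if i \<in> B then c i else \<phi> (c i) (m i)) = (if i \<in> B then c0 i else \<phi> (c0 i) (m0 i)))
             \<longleftrightarrow> m i = gg m0 c0 c i"
    if i: "i \<in> Y" "i \<notin> B" "i \<notin> X" for i
  proof -
    have iE: "i \<in> E" using i Y by auto
    have ci: "c i \<in> A" "c0 i \<in> A" using C_mem c c0 iE by auto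
    have mi: "m i \<in> A" "m0 i \<in> A" using MA_mem m m0 iE i by auto
    have bj: "bij_betw (\<phi> (c i)) A A" using bij ci by blast
    have t: "\<phi> (c0 i) (m0 i) \<in> A" using bij ci mi by (auto simp: bij_betw_def)
    have "\<phi> (c i) (m i) = \<phi> (c0 i) (m0 i) \<longleftrightarrow> m i = inv_into A (\<phi> (c i)) (\<phi> (c0 i) (m0 i))"
    proof
      assume "\<phi> (c i) (m i) = \<phi> (c0 i) (m0 i)"
      thus "m i = inv_into A (\<phi> (c i)) (\<phi> (c0 i) (m0 i))"
        using bj mi by (metis bij_betw_inv_into_left)
    next
      assume "m i = inv_into A (\<phi> (c i)) (\<phi> (c0 i) (m0 i))"
      thus "\<phi> (c i) (m i) = \<phi> (c0 i) (m0 i)"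
        using bj t by (metis bij_betw_inv_into_right)
    qed
    thus ?thesis using i unfolding gg_def by simp
  qed
  show ?thesis
  proof
    assume L: "proj Y (Ph m c) = proj Y (Ph m0 c0) \<and> proj X m = proj X m0"
    have all: "\<forall>i\<in>Y. (if i \<in> B then c i else \<phi> (c i) (m i)) = (if i \<in> B then c0 i else \<phi> (c0 i) (m0 i))"
      using L projPh_eq[OF Y, of m c m0 c0] by blast
    have mX: "\<forall>i\<in>X. m i = m0 i" using L proj_eq_iff[of X m m0] by blast
    have "\<forall>i\<in>Y \<inter> (B \<union> X). c i = c0 i"
    proof
      fix i assume i: "i \<in> Y \<inter> (B \<union> X)"
      show "c i = c0 i"
      proof (cases "i \<in> B")
        case True
        have e: "(if i \<in> B then c i else \<phi> (c i) (m i)) = (if i \<in> B then c0 i else \<phi> (c0 i) (m0 i))"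
          using all i by blast
        thus ?thesis using True by simp
      next
        case False
        hence "i \<in> X" using i by auto
        have e: "(if i \<in> B then c i else \<phi> (c i) (m i)) = (if i \<in> B then c0 i else \<phi> (c0 i) (m0 i))"
          using all i by blast
        have "m i = m0 i" using mX \<open>i \<in> X\<close> by blast
        thus ?thesis using pt[of i] e i \<open>i \<in> X\<close> by blast
      qed
    qed
    moreover have "\<forall>i\<in>X \<union> (Y - (B \<union> X)). m i = gg m0 c0 c i"
    proof
      fix i assume i: "i \<in> X \<union> (Y - (B \<union> X))"
      show "m i = gg m0 c0 c i"
      proof (cases "i \<in> X")
        case True thus ?thesis using mX unfolding gg_def by simp
      next
        case False
        hence i2: "i \<in> Y" "i \<notin> B" "i \<notin> X" using i by auto
        have e: "(if i \<in> B then c i else \<phi> (c i) (m i)) = (if i \<in> B then c0 i else \<phi> (c0 i) (m0 i))"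
          using all i2(1) by blast
        hence "\<phi> (c i) (m i) = \<phi> (c0 i) (m0 i)" using i2(2) by simp
        thus ?thesis using pw[OF i2] i2(2) by simp
      qed
    qed
    ultimately show "proj (Y \<inter> (B \<union> X)) c = proj (Y \<inter> (B \<union> X)) c0 \<and> (\<forall>i\<in>X \<union> (Y - (B \<union> X)). m i = gg m0 c0 c i)"
      using proj_eq_iff[of "Y \<inter> (B \<union> X)" c c0] by blast
  next
    assume R: "proj (Y \<inter> (B \<union> X)) c = proj (Y \<inter> (B \<union> X)) c0 \<and> (\<forall>i\<in>X \<union> (Y - (B \<union> X)). m i = gg m0 c0 c i)"
    have cZ: "\<forall>i\<in>Y \<inter> (B \<union> X). c i = c0 i" using R proj_eq_iff[of "Y \<inter> (B \<union> X)" c c0] by blast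
    have mX: "\<forall>i\<in>X. m i = m0 i"
    proof
      fix i assume i: "i \<in> X"
      hence "m i = gg m0 c0 c i" using R by blast
      thus "m i = m0 i" using i unfolding gg_def by simp
    qed
    have "\<forall>i\<in>Y. (if i \<in> B then c i else \<phi> (c i) (m i)) = (if i \<in> B then c0 i else \<phi> (c0 i) (m0 i))"
    proof
      fix i assume i: "i \<in> Y"
      show "(if i \<in> B then c i else \<phi> (c i) (m i)) = (if i \<in> B then c0 i else \<phi> (c0 i) (m0 i))"
      proof (cases "i \<in> B")
        case True thus ?thesis using cZ i by auto
      next
        case False
        show ?thesis
        proof (cases "i \<in> X")
          case True thus ?thesis using cZ mX i False by auto
        next
          case nX: False
          have "m i = gg m0 c0 c i" using R i False nX by blast
          thus ?thesis using pw[OF i False nX] False by simp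
        qed
      qed
    qed
    thus "proj Y (Ph m c) = proj Y (Ph m0 c0) \<and> proj X m = proj X m0"
      using projPh_eq[OF Y, of m c m0 c0] mX proj_eq_iff[of X m m0] by blast
  qed
qed

end


lemma prod_if_const:
  fixes q :: nat
  assumes "finite S"
  shows "(\<Prod>i\<in>S. if i \<in> T then 1 else q) = q ^ card (S - T)"
proof -
  have "(\<Prod>i\<in>S. if i \<in> T then 1 else q) = (\<Prod>i\<in>S \<inter> T. 1) * (\<Prod>i\<in>S - T. q)"
    using prod.Int_Diff[OF assms, of "\<lambda>i. if i \<in> T then 1 else q" T] by simp
  thus ?thesis by simp
qed

context aacp begin

lemma card_MS:
  assumes "S \<subseteq> E - B" "\<forall>i\<in>S. g i \<in> A"
  shows "card {m\<in>MA. \<forall>i\<in>S. m i = g i} = q ^ card ((E - B) - S)"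
proof -
  have "{m\<in>MA. \<forall>i\<in>S. m i = g i} = PiE (E - B) (\<lambda>i. if i \<in> S then {g i} else A)"
  proof (rule set_eqI)
    fix m :: "nat \<Rightarrow> 'a"
    have F: "\<And>i. i \<in> E - B \<Longrightarrow> m i \<in> (if i \<in> S then {g i} else A) \<longleftrightarrow> (m i \<in> A \<and> (i \<in> S \<longrightarrow> m i = g i))"
      using assms by auto
    have "m \<in> PiE (E - B) (\<lambda>i. if i \<in> S then {g i} else A) \<longleftrightarrow>
       (\<forall>i\<in>E - B. m i \<in> (if i \<in> S then {g i} else A)) \<and> m \<in> extensional (E - B)" by (rule PiE_iff)
    moreover have "m \<in> MA \<longleftrightarrow> (\<forall>i\<in>E - B. m i \<in> A) \<and> m \<in> extensional (E - B)" by (rule PiE_iff)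
    ultimately show "m \<in> {m\<in>MA. \<forall>i\<in>S. m i = g i} \<longleftrightarrow> m \<in> PiE (E - B) (\<lambda>i. if i \<in> S then {g i} else A)"
      using F assms(1) by blast
  qed
  hence "card {m\<in>MA. \<forall>i\<in>S. m i = g i} = (\<Prod>i\<in>E - B. card (if i \<in> S then {g i} else A))"
    by (simp add: card_PiE)
  also have "\<dots> = (\<Prod>i\<in>E - B. if i \<in> S then 1 else q)"
    by (rule prod.cong) auto
  also have "\<dots> = q ^ card ((E - B) - S)" by (rule prod_if_const) simp
  finally show ?thesis .
qed

lemma gg_in: assumes "m0 \<in> MA" "c0 \<in> C" "c \<in> C" "i \<in> X \<union> (E - (B \<union> X))"
  shows "gg m0 c0 c i \<in> A"
proof (cases "i \<in> X")
  case True thus ?thesis using MA_mem[OF assms(1)] XB unfolding gg_def by auto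
next
  case False
  hence iE: "i \<in> E" "i \<notin> B" using assms(4) by auto
  have ci: "c i \<in> A" "c0 i \<in> A" using C_mem assms iE by auto
  have mi: "m0 i \<in> A" using MA_mem assms(1) iE by auto
  have bj: "bij_betw (\<phi> (c i)) A A" using bij ci by blast
  have t: "\<phi> (c0 i) (m0 i) \<in> A" using bij ci mi by (auto simp: bij_betw_def)
  hence "\<phi> (c0 i) (m0 i) \<in> \<phi> (c i) ` A" using bj by (simp add: bij_betw_def)
  hence "inv_into A (\<phi> (c i)) (\<phi> (c0 i) (m0 i)) \<in> A" by (rule inv_into_into)
  thus ?thesis using False unfolding gg_def by simp
qed

lemma cnt1:
  assumes Y: "Y \<subseteq> E" and m0: "m0 \<in> MA" and c0: "c0 \<in> C"
  shows "card {x\<in>MA \<times> C. (fst x, proj Y (Ph (fst x) (snd x)), proj X (fst x)) =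
                          (m0, proj Y (Ph m0 c0), proj X m0)}
       = card {c\<in>C. proj Y c = proj Y c0}"
proof -
  have "{x\<in>MA \<times> C. (fst x, proj Y (Ph (fst x) (snd x)), proj X (fst x)) =
                          (m0, proj Y (Ph m0 c0), proj X m0)} = Pair m0 ` {c\<in>C. proj Y c = proj Y c0}"
  proof (rule set_eqI)
    fix x :: "(nat \<Rightarrow> 'a) \<times> (nat \<Rightarrow> 'a)"
    obtain m c where x: "x = (m, c)" by force
    show "x \<in> {x\<in>MA \<times> C. (fst x, proj Y (Ph (fst x) (snd x)), proj X (fst x)) =
                          (m0, proj Y (Ph m0 c0), proj X m0)} \<longleftrightarrow> x \<in> Pair m0 ` {c\<in>C. proj Y c = proj Y c0}"
      unfolding x using eq1[OF Y m0 _ c0, of c] m0 by auto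
  qed
  moreover have "inj_on (Pair m0) {c\<in>C. proj Y c = proj Y c0}" by (simp add: inj_on_def)
  ultimately show ?thesis by (simp add: card_image)
qed

lemma cntG:
  assumes Y: "Y \<subseteq> E" and m0: "m0 \<in> MA" and c0: "c0 \<in> C"
  shows "card {x\<in>MA \<times> C. (proj Y (Ph (fst x) (snd x)), proj X (fst x)) =
                          (proj Y (Ph m0 c0), proj X m0)}
       = card {c\<in>C. proj (Y \<inter> (B \<union> X)) c = proj (Y \<inter> (B \<union> X)) c0} * q ^ card ((E - B) - (X \<union> (Y - (B \<union> X))))"
proof -
  let ?Z = "Y \<inter> (B \<union> X)" and ?S = "X \<union> (Y - (B \<union> X))"
  let ?CZ = "{c\<in>C. proj ?Z c = proj ?Z c0}"
  let ?MS = "\<lambda>c. {m\<in>MA. \<forall>i\<in>?S. m i = gg m0 c0 c i}"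
  have SE: "?S \<subseteq> E - B" using XB Y by auto
  have "{x\<in>MA \<times> C. (proj Y (Ph (fst x) (snd x)), proj X (fst x)) = (proj Y (Ph m0 c0), proj X m0)}
      = (\<lambda>(c, m). (m, c)) ` (SIGMA c:?CZ. ?MS c)"
  proof (rule set_eqI)
    fix x :: "(nat \<Rightarrow> 'a) \<times> (nat \<Rightarrow> 'a)"
    obtain m c where x: "x = (m, c)" by force
    show "x \<in> {x\<in>MA \<times> C. (proj Y (Ph (fst x) (snd x)), proj X (fst x)) = (proj Y (Ph m0 c0), proj X m0)}
      \<longleftrightarrow> x \<in> (\<lambda>(c, m). (m, c)) ` (SIGMA c:?CZ. ?MS c)"
    proof
      assume "x \<in> {x\<in>MA \<times> C. (proj Y (Ph (fst x) (snd x)), proj X (fst x)) = (proj Y (Ph m0 c0), proj X m0)}"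
      hence h: "m \<in> MA" "c \<in> C" "proj Y (Ph m c) = proj Y (Ph m0 c0) \<and> proj X m = proj X m0"
        unfolding x by auto
      hence "proj ?Z c = proj ?Z c0 \<and> (\<forall>i\<in>?S. m i = gg m0 c0 c i)"
        using eqG[OF Y m0 c0 h(1) h(2)] by blast
      hence "(c, m) \<in> (SIGMA c:?CZ. ?MS c)" using h by auto
      thus "x \<in> (\<lambda>(c, m). (m, c)) ` (SIGMA c:?CZ. ?MS c)" unfolding x by force
    next
      assume "x \<in> (\<lambda>(c, m). (m, c)) ` (SIGMA c:?CZ. ?MS c)"
      hence h: "m \<in> MA" "c \<in> C" "proj ?Z c = proj ?Z c0 \<and> (\<forall>i\<in>?S. m i = gg m0 c0 c i)"
        unfolding x by auto
      hence "proj Y (Ph m c) = proj Y (Ph m0 c0) \<and> proj X m = proj X m0"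
        using eqG[OF Y m0 c0 h(1) h(2)] by blast
      thus "x \<in> {x\<in>MA \<times> C. (proj Y (Ph (fst x) (snd x)), proj X (fst x)) = (proj Y (Ph m0 c0), proj X m0)}"
        using h unfolding x by auto
    qed
  qed
  moreover have "inj_on (\<lambda>(c, m). (m, c)) (SIGMA c:?CZ. ?MS c)" by (auto simp: inj_on_def)
  ultimately have "card {x\<in>MA \<times> C. (proj Y (Ph (fst x) (snd x)), proj X (fst x)) = (proj Y (Ph m0 c0), proj X m0)}
      = card (SIGMA c:?CZ. ?MS c)" by (simp add: card_image)
  also have "\<dots> = (\<Sum>c\<in>?CZ. card (?MS c))"
  proof (rule card_SigmaI)
    show "finite ?CZ" using finC by simp
    show "\<forall>c\<in>?CZ. finite (?MS c)"
    proof
      fix c show "finite (?MS c)" by (rule finite_subset[OF _ finMA]) blast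
    qed
  qed
  also have "\<dots> = (\<Sum>c\<in>?CZ. q ^ card ((E - B) - ?S))"
  proof (rule sum.cong[OF refl])
    fix c assume "c \<in> ?CZ"
    hence c: "c \<in> C" by simp
    have "\<forall>i\<in>?S. gg m0 c0 c i \<in> A"
    proof
      fix i assume "i \<in> ?S"
      hence "i \<in> X \<union> (E - (B \<union> X))" using Y by blast
      thus "gg m0 c0 c i \<in> A" by (rule gg_in[OF m0 c0 c])
    qed
    thus "card (?MS c) = q ^ card ((E - B) - ?S)" by (rule card_MS[OF SE])
  qed
  also have "\<dots> = card ?CZ * q ^ card ((E - B) - ?S)" by simp
  finally show ?thesis .
qed

end

context aacp begin

lemma fib_pow: assumes "Y \<subseteq> E" "c0 \<in> C"
  shows "card {c\<in>C. proj Y c = proj Y c0} = q ^ (k - rk Y)"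
proof -
  have "card {c\<in>C. proj Y c = proj Y c0} * q ^ rk Y = q ^ k"
    using fiber[OF assms] NN_rk[OF assms(1)] cardC by simp
  also have "\<dots> = q ^ (k - rk Y) * q ^ rk Y" using rk_le_k[OF assms(1)] by (simp add: power_add[symmetric])
  finally show ?thesis using q_gt1 by simp
qed

lemma H_value: assumes Y: "Y \<subseteq> E"
  shows "H_mtM A \<phi> n B C X Y = real n - real k - real (card X) - rho A C B X Y"
proof -
  let ?P = "MA \<times> C"
  let ?p = "pmf_of_set ?P"
  let ?Z = "Y \<inter> (B \<union> X)" and ?W = "Y - (B \<union> X)"
  let ?S = "X \<union> ?W"
  define G0 where "G0 = (\<lambda>(m::nat\<Rightarrow>'a, w::nat\<Rightarrow>'a). (proj Y w, proj X m))"
  define FG where "FG = (\<lambda>x. (fst x, proj Y (Ph (fst x) (snd x)), proj X (fst x)))"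
  define GG where "GG = (\<lambda>x. (proj Y (Ph (fst x) (snd x)), proj X (fst x)))"
  define e where "e = card ((E - B) - ?S)"
  define L where "L = real (rk Y) + real e - real (rk ?Z)"
  have finP: "finite ?P" using finMA finC by simp
  have neP: "?P \<noteq> {}" using MA_ne C_ne by simp
  have m1: "map_pmf (\<lambda>\<omega>. (fst \<omega>, G0 \<omega>)) (model_pmf A \<phi> n B C) = map_pmf FG ?p"
    unfolding model_eq map_pmf_comp by (rule map_pmf_cong) (auto simp: G0_def FG_def hh_def split: prod.splits)
  have m2: "map_pmf G0 (model_pmf A \<phi> n B C) = map_pmf GG ?p"
    unfolding model_eq map_pmf_comp by (rule map_pmf_cong) (auto simp: G0_def GG_def hh_def split: prod.splits)
  have ZE: "?Z \<subseteq> E" using Y by auto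
  have key: "log (real q) (pmf (map_pmf GG ?p) (snd z) / pmf (map_pmf FG ?p) z) = L"
    if z: "z \<in> set_pmf (map_pmf FG ?p)" for z
  proof -
    obtain m0 c0 where mc: "m0 \<in> MA" "c0 \<in> C" "z = FG (m0, c0)" using z finP neP by auto
    have sz: "snd z = GG (m0, c0)" unfolding mc FG_def GG_def by simp
    have p1: "pmf (map_pmf FG ?p) z = real (q ^ (k - rk Y)) / real (card ?P)"
      unfolding pmf_map_of_set[OF finP neP] using cnt1[OF Y mc(1,2)] fib_pow[OF Y mc(2)]
      unfolding mc(3) FG_def by simp
    have p2: "pmf (map_pmf GG ?p) (snd z) = real (q ^ (k - rk ?Z) * q ^ e) / real (card ?P)"
      unfolding pmf_map_of_set[OF finP neP] sz using cntG[OF Y mc(1,2)] fib_pow[OF ZE mc(2)]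
      unfolding GG_def e_def by simp
    have cP: "real (card ?P) > 0" using finP neP by (simp add: card_gt_0_iff)
    have "pmf (map_pmf GG ?p) (snd z) / pmf (map_pmf FG ?p) z
        = real (q ^ (k - rk ?Z) * q ^ e) / real (q ^ (k - rk Y))"
      unfolding p1 p2 using cP by (simp add: field_simps)
    also have "\<dots> = real q powr (real (k - rk ?Z) + real e - real (k - rk Y))"
      using q_gt1 by (simp add: powr_add powr_diff powr_realpow)
    finally have "log (real q) (pmf (map_pmf GG ?p) (snd z) / pmf (map_pmf FG ?p) z)
        = real (k - rk ?Z) + real e - real (k - rk Y)"
      using q_gt1 by simp
    also have "\<dots> = L" unfolding L_def using rk_le_k[OF Y] rk_le_k[OF ZE] by simp
    finally show ?thesis .
  qed
  have "H_mtM A \<phi> n B C X Y = (\<Sum>z\<in>set_pmf (map_pmf FG ?p). pmf (map_pmf FG ?p) z *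
        log (real q) (pmf (map_pmf GG ?p) (snd z) / pmf (map_pmf FG ?p) z))"
    unfolding H_mtM_def cond_entropy_def G0_def[symmetric] m1 m2 ..
  also have "\<dots> = (\<Sum>z\<in>set_pmf (map_pmf FG ?p). pmf (map_pmf FG ?p) z * L)"
  proof (rule sum.cong[OF refl])
    fix z assume z: "z \<in> set_pmf (map_pmf FG ?p)"
    show "pmf (map_pmf FG ?p) z * log (real q) (pmf (map_pmf GG ?p) (snd z) / pmf (map_pmf FG ?p) z)
        = pmf (map_pmf FG ?p) z * L" by (simp only: key[OF z])
  qed
  also have "\<dots> = L * (\<Sum>z\<in>set_pmf (map_pmf FG ?p). pmf (map_pmf FG ?p) z)"
    by (simp add: sum_distrib_left mult.commute)
  also have "(\<Sum>z\<in>set_pmf (map_pmf FG ?p). pmf (map_pmf FG ?p) z) = 1"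
    by (rule sum_pmf_eq_1) (use finP neP in auto)
  finally have H: "H_mtM A \<phi> n B C X Y = L" by simp
  have SE: "?S \<subseteq> E - B" using XB Y by auto
  have finS: "finite ?S" using finite_subset[OF SE] by simp
  have cS: "card ?S = card X + card ?W"
    by (rule card_Un_disjoint) (use finS in auto)
  have cEB: "card (E - B) = n - k" using basis_props by (simp add: card_Diff_subset finite_subset)
  have "card ?S \<le> card (E - B)" by (rule card_mono) (use SE in auto)
  hence e: "real e = real (n - k) - real (card X) - real (card ?W)"
    unfolding e_def using card_Diff_subset[OF finS SE] cS cEB by simp
  have kn: "k \<le> n" using basis_props card_mono[of E B] by simp
  have rho: "rho A C B X Y = real (card ?W) + real (rk ?Z) - real (rk Y)"
    unfolding rho_def rank_D_def using code_rank_rk[OF Y] code_rank_rk[OF ZE] by simp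
  show ?thesis using H e kn unfolding L_def rho by simp
qed

end


lemma logic_aux:
  fixes f :: "'b \<Rightarrow> int"
  shows "((\<exists>Y. P Y \<and> f Y = int j) \<and> (\<forall>Y. P Y \<longrightarrow> f Y \<le> int j))
     \<longleftrightarrow> ((\<exists>Y. P Y \<and> int j \<le> f Y) \<and> \<not> (\<exists>Y. P Y \<and> int (j + 1) \<le> f Y))"
proof
  assume "(\<exists>Y. P Y \<and> f Y = int j) \<and> (\<forall>Y. P Y \<longrightarrow> f Y \<le> int j)"
  thus "(\<exists>Y. P Y \<and> int j \<le> f Y) \<and> \<not> (\<exists>Y. P Y \<and> int (j + 1) \<le> f Y)" by force
next
  assume a: "(\<exists>Y. P Y \<and> int j \<le> f Y) \<and> \<not> (\<exists>Y. P Y \<and> int (j + 1) \<le> f Y)"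
  then obtain Y where Y: "P Y" "int j \<le> f Y" by blast
  have le: "\<forall>Y. P Y \<longrightarrow> f Y \<le> int j" using a by force
  hence "f Y = int j" using Y by force
  thus "(\<exists>Y. P Y \<and> f Y = int j) \<and> (\<forall>Y. P Y \<longrightarrow> f Y \<le> int j)" using Y le by blast
qed
context aacp begin

definition rr :: "nat set \<Rightarrow> int" where
  "rr Y = int (card (Y - (B \<union> X))) + int (rk (Y \<inter> (B \<union> X))) - int (rk Y)"

lemma rho_rr: assumes "Y \<subseteq> E" shows "rho A C B X Y = real_of_int (rr Y)"
proof -
  have ZE: "Y \<inter> (B \<union> X) \<subseteq> E" using assms by auto
  show ?thesis unfolding rho_def rank_D_def rr_def
    using code_rank_rk[OF assms] code_rank_rk[OF ZE] by simp
qed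

lemma H_rr: assumes "Y \<subseteq> E"
  shows "H_mtM A \<phi> n B C X Y = real n - real k - real (card X) - real_of_int (rr Y)"
  using H_value[OF assms] rho_rr[OF assms] by simp

lemma rk_empty: "rk {} = 0"
proof -
  have pc: "\<And>c. proj {} c = (\<lambda>_. undefined)" unfolding proj_def by (simp add: fun_eq_iff)
  have "proj {} ` C = {\<lambda>_. undefined}" using C_ne by (simp add: pc image_constant_conv)
  hence "NN {} = 1" unfolding NN_def by simp
  hence "q ^ rk {} = q ^ 0" using NN_rk[of "{}"] by simp
  thus ?thesis by (rule pow_inj)
qed

lemma rr_empty: "rr {} = 0" unfolding rr_def using rk_empty by simp

lemma rr_step: assumes Y: "Y \<subseteq> E" and e: "e \<in> E" "e \<notin> Y"
  shows "rr Y \<le> rr (insert e Y) \<and> rr (insert e Y) \<le> rr Y + 1"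
proof -
  have fY: "finite Y" using Y finite_subset by blast
  have dY: "rk (insert e Y) = rk Y \<or> rk (insert e Y) = Suc (rk Y)" by (rule rk_insert[OF Y e(1)])
  show ?thesis
  proof (cases "e \<in> B \<union> X")
    case False
    have W: "insert e Y - (B \<union> X) = insert e (Y - (B \<union> X))" using False by auto
    have cW: "card (insert e Y - (B \<union> X)) = Suc (card (Y - (B \<union> X)))"
      unfolding W using e(2) fY by simp
    have Z: "insert e Y \<inter> (B \<union> X) = Y \<inter> (B \<union> X)" using False by auto
    show ?thesis using dY unfolding rr_def cW Z by auto
  next
    case True
    have W: "insert e Y - (B \<union> X) = Y - (B \<union> X)" using True by auto
    have Z: "insert e Y \<inter> (B \<union> X) = insert e (Y \<inter> (B \<union> X))" using True by auto
    have ZE: "Y \<inter> (B \<union> X) \<subseteq> E" using Y by auto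
    have dZ: "rk (insert e (Y \<inter> (B \<union> X))) = rk (Y \<inter> (B \<union> X)) \<or>
              rk (insert e (Y \<inter> (B \<union> X))) = Suc (rk (Y \<inter> (B \<union> X)))" by (rule rk_insert[OF ZE e(1)])
    have sm: "rk (insert e (Y \<inter> (B \<union> X))) = rk (Y \<inter> (B \<union> X)) \<Longrightarrow> rk (insert e Y) = rk Y"
      by (rule submod[OF _ Y e(1)]) auto
    show ?thesis using dY dZ sm unfolding rr_def W Z by auto
  qed
qed

lemma rr_mono_aux: "finite D \<Longrightarrow> Y \<union> D \<subseteq> E \<Longrightarrow> rr Y \<le> rr (Y \<union> D)"
proof (induction D rule: finite_induct)
  case empty thus ?case by simp
next
  case (insert x F)
  have "rr Y \<le> rr (Y \<union> F)" using insert by auto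
  moreover have "rr (Y \<union> F) \<le> rr (Y \<union> insert x F)"
  proof (cases "x \<in> Y \<union> F")
    case True thus ?thesis by (simp add: insert_absorb)
  next
    case False
    have "Y \<union> insert x F = insert x (Y \<union> F)" by auto
    thus ?thesis using rr_step[of "Y \<union> F" x] insert.prems False by auto
  qed
  ultimately show ?case by simp
qed

lemma rr_mono: assumes "Y \<subseteq> Y'" "Y' \<subseteq> E" shows "rr Y \<le> rr Y'"
proof -
  have "finite (Y' - Y)" using assms finite_subset by blast
  moreover have "Y \<union> (Y' - Y) = Y'" using assms by auto
  ultimately show ?thesis using rr_mono_aux[of "Y' - Y" Y] assms by auto
qed

lemma rr_down_aux: "finite Y \<Longrightarrow> Y \<subseteq> E \<Longrightarrow> 0 \<le> j \<Longrightarrow> j \<le> rr Y \<Longrightarrow> \<exists>Y'\<subseteq>Y. rr Y' = j"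
proof (induction Y arbitrary: j rule: finite_induct)
  case empty thus ?case using rr_empty by auto
next
  case (insert x F)
  have FE: "F \<subseteq> E" "x \<in> E" using insert.prems by auto
  have st: "rr (insert x F) \<le> rr F + 1" using rr_step[OF FE(1) FE(2) insert.hyps(2)] by simp
  show ?case
  proof (cases "j \<le> rr F")
    case True
    then obtain Y' where "Y' \<subseteq> F" "rr Y' = j" using insert.IH[OF FE(1) insert.prems(2)] by blast
    thus ?thesis by blast
  next
    case False
    hence "j = rr (insert x F)" using st insert.prems(3) by simp
    thus ?thesis by blast
  qed
qed

lemma rr_down: assumes "Y \<subseteq> E" "0 \<le> j" "j \<le> rr Y" shows "\<exists>Y'\<subseteq>Y. rr Y' = j"
  using rr_down_aux[of Y j] assms finite_subset by blast

lemma cardX: "card X + k \<le> n"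
proof -
  have "card X \<le> card (E - B)" by (rule card_mono) (use XB in auto)
  moreover have "card (E - B) = n - k" using basis_props by (simp add: card_Diff_subset finite_subset)
  moreover have "k \<le> n" using basis_props card_mono[of E B] by simp
  ultimately show ?thesis by simp
qed

lemma rr_E: "rr E = int (n - card X - k)"
proof -
  have BX: "B \<union> X \<subseteq> E" using XB basis_props by auto
  have "E \<inter> (B \<union> X) = B \<union> X" using BX by auto
  moreover have "rk (B \<union> X) = k" using rk_mono[of B "B \<union> X", OF _ BX] rk_le_k[OF BX] basis_props by simp
  moreover have "card (E - (B \<union> X)) = n - (k + card X)"
  proof -
    have "card (B \<union> X) = k + card X"
      using card_Un_disjoint[of B X] basis_props XB finite_subset[OF BX] by auto
    thus ?thesis using card_Diff_subset[of "B \<union> X" E] BX finite_subset[OF BX] by simp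
  qed
  ultimately show ?thesis unfolding rr_def using rk_E cardX by simp
qed

lemma rr_le: "Y \<subseteq> E \<Longrightarrow> rr Y \<le> int (n - card X - k)"
  using rr_mono[of Y E] rr_E by simp

lemma extend: assumes "Y \<subseteq> E" "card Y \<le> \<mu>" "\<mu> \<le> n"
  shows "\<exists>Y2. Y \<subseteq> Y2 \<and> Y2 \<subseteq> E \<and> card Y2 = \<mu>"
proof -
  have fY: "finite Y" using assms finite_subset by blast
  have "card (E - Y) = n - card Y" using card_Diff_subset[OF fY assms(1)] by simp
  hence "\<mu> - card Y \<le> card (E - Y)" using assms by simp
  then obtain T where T: "T \<subseteq> E - Y" "card T = \<mu> - card Y" "finite T"
    by (rule obtain_subset_with_card_n)
  have "card (Y \<union> T) = card Y + card T" using T fY by (intro card_Un_disjoint) auto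
  hence "card (Y \<union> T) = \<mu>" using T assms by simp
  thus ?thesis using T assms by (intro exI[of _ "Y \<union> T"]) auto
qed

lemma sigma_le: assumes j: "j \<le> n - card X - k" and mu: "\<mu> \<le> n"
  shows "sigma A n k C B X j \<le> enat \<mu> \<longleftrightarrow> (\<exists>Y. Y \<subseteq> E \<and> card Y = \<mu> \<and> int j \<le> rr Y)"
proof -
  let ?T = "{Y. Y \<subseteq> E \<and> rho A C B X Y = real j}"
  have sj: "sigma A n k C B X j = (INF Y\<in>?T. enat (card Y))" unfolding sigma_def using j by simp
  have T: "Y \<in> ?T \<longleftrightarrow> Y \<subseteq> E \<and> rr Y = int j" for Y
    using rho_rr[of Y] by auto
  show ?thesis
  proof
    assume "sigma A n k C B X j \<le> enat \<mu>"
    hence "(INF Y\<in>?T. enat (card Y)) < enat (Suc \<mu>)" using sj by (simp add: le_less_trans)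
    then obtain Y where Y: "Y \<in> ?T" "enat (card Y) < enat (Suc \<mu>)" by (auto simp: INF_less_iff)
    hence YE: "Y \<subseteq> E" "rr Y = int j" "card Y \<le> \<mu>" using T by auto
    obtain Y2 where Y2: "Y \<subseteq> Y2" "Y2 \<subseteq> E" "card Y2 = \<mu>" using extend[OF YE(1) YE(3) mu] by blast
    have "rr Y \<le> rr Y2" by (rule rr_mono[OF Y2(1,2)])
    thus "\<exists>Y. Y \<subseteq> E \<and> card Y = \<mu> \<and> int j \<le> rr Y" using Y2 YE by auto
  next
    assume "\<exists>Y. Y \<subseteq> E \<and> card Y = \<mu> \<and> int j \<le> rr Y"
    then obtain Y where Y: "Y \<subseteq> E" "card Y = \<mu>" "int j \<le> rr Y" by blast
    obtain Y' where Y': "Y' \<subseteq> Y" "rr Y' = int j" using rr_down[OF Y(1) _ Y(3)] by auto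
    have Y'E: "Y' \<subseteq> E" using Y' Y by auto
    hence "Y' \<in> ?T" using T Y' by auto
    hence "(INF Y\<in>?T. enat (card Y)) \<le> enat (card Y')" by (rule INF_lower)
    also have "card Y' \<le> card Y" using Y' Y finite_subset by (intro card_mono) auto
    hence "enat (card Y') \<le> enat \<mu>" using Y by simp
    finally show "sigma A n k C B X j \<le> enat \<mu>" using sj by simp
  qed
qed

lemma main_aux: assumes j: "j \<le> n - card X - k" and mu: "\<mu> \<le> n"
  shows "Delta_mu A \<phi> n k B C X \<mu> = real (card X + j) \<longleftrightarrow>
           (sigma A n k C B X j \<le> enat \<mu> \<and> enat \<mu> < sigma A n k C B X (j + 1))"
proof -
  let ?N = "n - card X - k"
  let ?S = "{H_mtM A \<phi> n B C X Y | Y. Y \<subseteq> E \<and> card Y = \<mu>}"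
  let ?v = "real n - real k - real (card X + j)"
  have finS: "finite ?S"
  proof -
    have "?S \<subseteq> (\<lambda>Y. H_mtM A \<phi> n B C X Y) ` Pow E" by auto
    thus ?thesis by (rule finite_subset) simp
  qed
  have D: "Delta_mu A \<phi> n k B C X \<mu> = real (card X + j) \<longleftrightarrow> Min ?S = ?v"
    unfolding Delta_mu_def E_mu_def by linarith
  have Hv: "H_mtM A \<phi> n B C X Y = ?v \<longleftrightarrow> rr Y = int j" if "Y \<subseteq> E" for Y
  proof -
    have "H_mtM A \<phi> n B C X Y = ?v \<longleftrightarrow> real_of_int (rr Y) = real j" using H_rr[OF that] by simp
    also have "\<dots> \<longleftrightarrow> rr Y = int j" by (metis of_int_eq_iff of_int_of_nat_eq)
    finally show ?thesis .
  qed
  have Hle: "?v \<le> H_mtM A \<phi> n B C X Y \<longleftrightarrow> rr Y \<le> int j" if "Y \<subseteq> E" for Y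
  proof -
    have "?v \<le> H_mtM A \<phi> n B C X Y \<longleftrightarrow> real_of_int (rr Y) \<le> real j" using H_rr[OF that] by simp
    also have "\<dots> \<longleftrightarrow> rr Y \<le> int j" by (metis of_int_le_iff of_int_of_nat_eq)
    finally show ?thesis .
  qed
  have M: "Min ?S = ?v \<longleftrightarrow> (\<exists>Y. Y \<subseteq> E \<and> card Y = \<mu> \<and> rr Y = int j) \<and>
                          (\<forall>Y. Y \<subseteq> E \<and> card Y = \<mu> \<longrightarrow> rr Y \<le> int j)"
  proof
    assume m: "Min ?S = ?v"
    have ne: "?S \<noteq> {}" using extend[of "{}" \<mu>] mu by auto
    have "?v \<in> ?S" using Min_in[OF finS ne] m by simp
    then obtain Y where Y: "Y \<subseteq> E" "card Y = \<mu>" "H_mtM A \<phi> n B C X Y = ?v" by auto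
    moreover have "\<forall>Y. Y \<subseteq> E \<and> card Y = \<mu> \<longrightarrow> rr Y \<le> int j"
    proof (intro allI impI)
      fix Y assume Y: "Y \<subseteq> E \<and> card Y = \<mu>"
      hence "H_mtM A \<phi> n B C X Y \<in> ?S" by auto
      hence "Min ?S \<le> H_mtM A \<phi> n B C X Y" using finS by simp
      thus "rr Y \<le> int j" using Hle[of Y] Y m by simp
    qed
    ultimately show "(\<exists>Y. Y \<subseteq> E \<and> card Y = \<mu> \<and> rr Y = int j) \<and>
                          (\<forall>Y. Y \<subseteq> E \<and> card Y = \<mu> \<longrightarrow> rr Y \<le> int j)" using Hv by blast
  next
    assume r: "(\<exists>Y. Y \<subseteq> E \<and> card Y = \<mu> \<and> rr Y = int j) \<and>
                          (\<forall>Y. Y \<subseteq> E \<and> card Y = \<mu> \<longrightarrow> rr Y \<le> int j)"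
    show "Min ?S = ?v"
    proof (rule Min_eqI[OF finS])
      fix y assume "y \<in> ?S"
      then obtain Y where Y: "Y \<subseteq> E" "card Y = \<mu>" "y = H_mtM A \<phi> n B C X Y" by auto
      thus "?v \<le> y" using Hle[of Y] r by auto
    next
      obtain Y where Y: "Y \<subseteq> E" "card Y = \<mu>" "rr Y = int j" using r by blast
      hence "H_mtM A \<phi> n B C X Y = ?v" using Hv by blast
      hence "?v = H_mtM A \<phi> n B C X Y \<and> Y \<subseteq> E \<and> card Y = \<mu>" using Y by simp
      thus "?v \<in> ?S" by blast
    qed
  qed
  show ?thesis
  proof (cases "j = ?N")
    case True
    have inf: "sigma A n k C B X (j + 1) = \<infinity>" unfolding sigma_def using True by simp
    have "(\<exists>Y. Y \<subseteq> E \<and> card Y = \<mu> \<and> rr Y = int j) \<and> (\<forall>Y. Y \<subseteq> E \<and> card Y = \<mu> \<longrightarrow> rr Y \<le> int j)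
        \<longleftrightarrow> (\<exists>Y. Y \<subseteq> E \<and> card Y = \<mu> \<and> int j \<le> rr Y)"
      using rr_le True by (auto intro: order.antisym)
    thus ?thesis using D M sigma_le[OF j mu] inf by simp
  next
    case False
    hence j1: "j + 1 \<le> ?N" using j by simp
    have "enat \<mu> < sigma A n k C B X (j + 1) \<longleftrightarrow> \<not> (\<exists>Y. Y \<subseteq> E \<and> card Y = \<mu> \<and> int (j + 1) \<le> rr Y)"
      using sigma_le[OF j1 mu] by (simp add: not_le[symmetric])
    moreover have "(\<exists>Y. Y \<subseteq> E \<and> card Y = \<mu> \<and> rr Y = int j) \<and> (\<forall>Y. Y \<subseteq> E \<and> card Y = \<mu> \<longrightarrow> rr Y \<le> int j)
        \<longleftrightarrow> (\<exists>Y. Y \<subseteq> E \<and> card Y = \<mu> \<and> int j \<le> rr Y) \<and> \<not> (\<exists>Y. Y \<subseteq> E \<and> card Y = \<mu> \<and> int (j + 1) \<le> rr Y)"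
      using logic_aux[of "\<lambda>Y. Y \<subseteq> E \<and> card Y = \<mu>" rr j] by simp
    ultimately show ?thesis using D M sigma_le[OF j mu] by simp
  qed
qed

end

theorem mainTheorem11:
  fixes A :: "'a set" and C :: "(nat \<Rightarrow> 'a) set" and n k :: nat
    and B X :: "nat set" and \<phi> :: "'a \<Rightarrow> 'a \<Rightarrow> 'a"
  assumes "finite A" and "card A \<ge> 2"
    and "almost_affine A n k C"
    and "code_basis A n C B"
    and "\<forall>y \<in> A. bij_betw (\<phi> y) A A \<and> bij_betw (\<lambda>x. \<phi> x y) A A"
    and "X \<subseteq> {1..n} - B"
  shows "\<forall>j \<le> n - card X - k. \<forall>\<mu> \<le> n.
           Delta_mu A \<phi> n k B C X \<mu> = real (card X + j) \<longleftrightarrow>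
           (sigma A n k C B X j \<le> enat \<mu> \<and> enat \<mu> < sigma A n k C B X (j + 1))"
proof -
  interpret aacp A C n k B \<phi> X
    using assms by unfold_locales auto
  show ?thesis using main_aux by blast
qed


end
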